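(* Let $\delta\in(0,1)$, $\sigma_z^2>0$, let $B\sim p_\beta$ (finite second moment) and $Z\sim N(0,1)$ be independent, and let $\eta(a;\tau)=(|a|-\tau)_+\mathrm{sign}(a)$. Let $(\chi,\hat\sigma,\lambda)$ with $\chi>0$, $\hat\sigma>0$, $\lambda>0$ satisfy \[ \hat{\sigma}^2=\sigma_z^2+\frac{1}{\delta}\mathbb{E}_{B,Z}\left[(\eta(B+\hat{\sigma}Z; \chi \hat{\sigma})-B)^2\right],\qquad \lambda=\chi\hat{\sigma}\left(1-\frac{1}{\delta}\mathbb{P}(|B+\hat{\sigma}Z|>\chi \hat{\sigma})\right), \] where $\hat\sigma=\hat\sigma(\chi)$ is regarded as the function of $\chi$ determined by the first equation. Then \[ \frac{d}{d\chi}\mathbb{P}\big(|\eta(B+\hat{\sigma}Z;\chi \hat{\sigma})|>0\big) <0 . \]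
   Context: These equations are the fixed-point equations that describe the asymptotic behavior of the LASSO solution with regularization parameter $\lambda>0$ under Gaussian design; for $\sigma_z^2>0$ the first equation has a unique solution $\hat\sigma$ for each $\chi$. *)

theory Defs
  imports "HOL-Probability.Probability"
begin

definition soft_thresh :: "real \<Rightarrow> real \<Rightarrow> real" where
  "soft_thresh a \<tau> = max (\<bar>a\<bar> - \<tau>) 0 * sgn a"

definition N01 :: "real measure" where
  "N01 = density lborel std_normal_density"

definition E_BZ :: "real measure \<Rightarrow> (real \<Rightarrow> real \<Rightarrow> real) \<Rightarrow> real" where
  "E_BZ p f = integral\<^sup>L (p \<Otimes>\<^sub>M N01) (\<lambda>(b, z). f b z)"

definition P_BZ :: "real measure \<Rightarrow> (real \<Rightarrow> real \<Rightarrow> bool) \<Rightarrow> real" where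
  "P_BZ p A = measure (p \<Otimes>\<^sub>M N01) {(b, z). A b z}"

end

theory Submission
  imports Defs "HOL-Real_Asymp.Real_Asymp"
begin


abbreviation gd :: "real \<Rightarrow> real" where "gd \<equiv> std_normal_density"

lemma gd_def: "gd x = exp (- x\<^sup>2 / 2) / sqrt (2 * pi)"
  by (simp add: std_normal_density_def)

lemma gd_pos: "gd x > 0" by (simp add: gd_def)
lemma gd_even: "gd (-x) = gd x" by (simp add: gd_def)

lemma DERIV_gd: "(gd has_real_derivative (- x * gd x)) (at x)"
  unfolding gd_def[abs_def]
  by (auto intro!: derivative_eq_intros simp: field_simps power2_eq_square)

lemma gd_le: "gd x \<le> 1 / sqrt (2 * pi)"
  by (simp add: gd_def divide_right_mono)

lemma prob_N01: "prob_space N01"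
  unfolding N01_def using prob_space_normal_density[of 1 0] by simp

lemma sets_N01[simp, measurable_cong]: "sets N01 = sets borel"
  unfolding N01_def by simp

lemma space_N01[simp]: "space N01 = UNIV"
  unfolding N01_def by simp

lemma measure_N01: "A \<in> sets borel \<Longrightarrow> measure N01 A = (LBINT x:A. gd x)"
proof -
  assume A: "A \<in> sets borel"
  interpret prob_space N01 by (rule prob_N01)
  have "measure N01 A = integral\<^sup>L N01 (indicator A)"
    using A by (simp add: emeasure_eq_measure)
  also have "\<dots> = (\<integral>x. gd x * indicator A x \<partial>lborel)"
    unfolding N01_def using A by (subst integral_density) auto
  also have "\<dots> = (LBINT x:A. gd x)"
    by (simp add: set_lebesgue_integral_def mult.commute)
  finally show ?thesis .
qed

definition Phi :: "real \<Rightarrow> real" where "Phi x = measure N01 {..x}"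

lemma Phi_diff: "a \<le> b \<Longrightarrow> Phi b - Phi a = (LBINT t=a..b. gd t)"
proof -
  assume ab: "a \<le> b"
  interpret prob_space N01 by (rule prob_N01)
  have "{..b} = {..a} \<union> {a<..b}" using ab by auto
  then have "Phi b = measure N01 ({..a} \<union> {a<..b})" unfolding Phi_def by simp
  also have "\<dots> = Phi a + measure N01 {a<..b}"
    unfolding Phi_def by (subst finite_measure_Union) auto
  finally have "Phi b = Phi a + measure N01 {a<..b}" .
  moreover have "measure N01 {a<..b} = (LBINT t=a..b. gd t)"
    using ab by (simp add: measure_N01 interval_integral_Ioc)
  ultimately show ?thesis by simp
qed

lemma DERIV_Phi: "(Phi has_real_derivative gd x) (at x)"
proof -
  let ?c = "x - 1" and ?d = "x + 1"
  have cont: "continuous_on {?c..?d} gd"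
    unfolding gd_def[abs_def] by (intro continuous_intros) auto
  have "((\<lambda>u. LBINT t=?c..u. gd t) has_vector_derivative gd x) (at x within {?c..?d})"
    by (rule interval_integral_FTC2[OF _ _ cont]) auto
  then have "((\<lambda>u. LBINT t=?c..u. gd t) has_vector_derivative gd x) (at x within {?c<..<?d})"
    by (rule has_vector_derivative_within_subset) auto
  then have "((\<lambda>u. LBINT t=?c..u. gd t) has_vector_derivative gd x) (at x)"
    by (subst (asm) has_vector_derivative_within_open) auto
  then have "((\<lambda>u. Phi ?c + (LBINT t=?c..u. gd t)) has_real_derivative gd x) (at x)"
    by (auto simp: has_real_derivative_iff_has_vector_derivative intro!: derivative_eq_intros)
  then show ?thesis
  proof (rule has_field_derivative_transform_within_open[where S="{?c<..<?d}"])
    fix u assume "u \<in> {?c<..<?d}"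
    then show "Phi ?c + (LBINT t=?c..u. gd t) = Phi u" using Phi_diff[of ?c u] by simp
  qed auto
qed

lemma continuous_Phi: "isCont Phi x"
  using DERIV_Phi DERIV_isCont by blast

lemma Phi_mono: "a \<le> b \<Longrightarrow> Phi a \<le> Phi b"
proof -
  interpret prob_space N01 by (rule prob_N01)
  show "a \<le> b \<Longrightarrow> Phi a \<le> Phi b" unfolding Phi_def by (intro finite_measure_mono) auto
qed

lemma Phi_bounds: "0 \<le> Phi x" "Phi x \<le> 1"
proof -
  interpret prob_space N01 by (rule prob_N01)
  show "0 \<le> Phi x" "Phi x \<le> 1" unfolding Phi_def by auto
qed

lemma Phi_at_top: "(Phi \<longlongrightarrow> 1) at_top"
proof -
  interpret prob_space N01 by (rule prob_N01)
  have "(\<lambda>n. measure N01 {..real n}) \<longlonglongrightarrow> measure N01 (\<Union>n. {..real n})"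
    by (intro finite_Lim_measure_incseq) (auto simp: incseq_def)
  moreover have "(\<Union>n. {..real n}) = UNIV"
    by (auto intro: real_arch_simple)
  ultimately have lim: "(\<lambda>n. Phi (real n)) \<longlonglongrightarrow> 1" unfolding Phi_def using prob_space by simp
  show ?thesis
  proof (rule order_tendstoI)
    fix y :: real assume "y < 1"
    then have "eventually (\<lambda>n. y < Phi (real n)) sequentially" using lim order_tendstoD(1) by blast
    then obtain N where N: "y < Phi (real N)" by (auto simp: eventually_sequentially)
    show "eventually (\<lambda>x. y < Phi x) at_top"
      using eventually_ge_at_top[of "real N"]
      by eventually_elim (use N Phi_mono in force)
  next
    fix y :: real assume "1 < y"
    then show "eventually (\<lambda>x. Phi x < y) at_top" using Phi_bounds(2) by (intro always_eventually allI) (auto intro: le_less_trans)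
  qed
qed

lemma Phi_at_bot: "(Phi \<longlongrightarrow> 0) at_bot"
proof -
  interpret prob_space N01 by (rule prob_N01)
  have "(\<lambda>n. measure N01 {..- real n}) \<longlonglongrightarrow> measure N01 (\<Inter>n. {..- real n})"
    by (intro finite_Lim_measure_decseq) (auto simp: decseq_def)
  moreover have "(\<Inter>n. {..- real n}) = {}"
  proof (safe)
    fix x assume x: "x \<in> (\<Inter>n. {..- real n})"
    obtain n where "- x \<le> real n" using real_arch_simple by blast
    moreover have "x \<le> - real (Suc n)" using x by blast
    ultimately show "x \<in> {}" by simp
  qed
  ultimately have lim: "(\<lambda>n. Phi (- real n)) \<longlonglongrightarrow> 0" unfolding Phi_def by simp
  show ?thesis
  proof (rule order_tendstoI)
    fix y :: real assume "0 < y"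
    then have "eventually (\<lambda>n. Phi (- real n) < y) sequentially" using lim order_tendstoD(2) by blast
    then obtain N where N: "Phi (- real N) < y" by (auto simp: eventually_sequentially)
    show "eventually (\<lambda>x. Phi x < y) at_bot"
      using eventually_le_at_bot[of "- real N"]
      by eventually_elim (use N Phi_mono in force)
  next
    fix y :: real assume "y < 0"
    then show "eventually (\<lambda>x. y < Phi x) at_bot" using Phi_bounds(1) by (intro always_eventually allI) (auto intro: less_le_trans)
  qed
qed

lemma Phi_neg: "Phi (- x) = 1 - Phi x"
proof -
  have d: "((\<lambda>x. Phi x + Phi (- x)) has_real_derivative 0) (at y)" for y
    by (auto intro!: derivative_eq_intros DERIV_Phi[THEN DERIV_chain2] simp: gd_even)
  have const: "Phi x + Phi (- x) = Phi y + Phi (- y)" for y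
    by (metis DERIV_isconst_all d)
  have "((\<lambda>y. Phi y + Phi (- y)) \<longlongrightarrow> 1 + 0) at_top"
    by (intro tendsto_add Phi_at_top filterlim_compose[OF Phi_at_bot] filterlim_uminus_at_bot_at_top)
  moreover have "((\<lambda>y. Phi y + Phi (- y)) \<longlongrightarrow> Phi x + Phi (- x)) at_top"
  proof -
    have "(\<lambda>y. Phi y + Phi (- y)) = (\<lambda>_. Phi x + Phi (- x))" by (intro ext) (rule const[symmetric])
    then show ?thesis by simp
  qed
  ultimately have "Phi x + Phi (- x) = 1 + 0"
    by (intro tendsto_unique[OF trivial_limit_at_top_linorder]) simp_all
  then show ?thesis by simp
qed


lemma DERIV_Phi_chain[derivative_intros]:
  "(f has_real_derivative f') (at x within s) \<Longrightarrow>
   ((\<lambda>x. Phi (f x)) has_real_derivative gd (f x) * f') (at x within s)"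
  using DERIV_chain2[OF DERIV_Phi] by blast

lemma DERIV_gd_chain[derivative_intros]:
  "(f has_real_derivative f') (at x within s) \<Longrightarrow>
   ((\<lambda>x. gd (f x)) has_real_derivative (- f x * gd (f x)) * f') (at x within s)"
  using DERIV_chain2[OF DERIV_gd] by blast

lemma continuous_on_Phi[continuous_intros]:
  "continuous_on s f \<Longrightarrow> continuous_on s (\<lambda>x. Phi (f x))"
  by (rule continuous_on_compose2[of UNIV Phi]) (auto intro: continuous_at_imp_continuous_on continuous_Phi)

lemma continuous_on_gd[continuous_intros]:
  "continuous_on s f \<Longrightarrow> continuous_on s (\<lambda>x. gd (f x))"
  unfolding gd_def by (intro continuous_intros) auto

lemma tendsto_Phi[tendsto_intros]: "(f \<longlongrightarrow> l) F \<Longrightarrow> ((\<lambda>x. Phi (f x)) \<longlongrightarrow> Phi l) F"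
  using continuous_Phi isCont_tendsto_compose by blast

lemma gd_lim_top: "((\<lambda>z. (a * z + b) * gd z) \<longlongrightarrow> 0) at_top"
  unfolding gd_def by real_asymp

lemma gd_lim_bot: "((\<lambda>z. (a * z + b) * gd z) \<longlongrightarrow> 0) at_bot"
  unfolding gd_def by real_asymp

lemma set_int_Ioi:
  fixes F f :: "real \<Rightarrow> real"
  assumes "\<And>x. (F has_real_derivative f x) (at x)" "continuous_on UNIV f" "integrable lborel f"
    "(F \<longlongrightarrow> L) at_top"
  shows "(LBINT x:{t<..}. f x) = L - F t"
proof -
  have "(LBINT x=ereal t..\<infinity>. f x) = L - F t"
  proof (rule interval_integral_FTC_integrable)
    show "set_integrable lborel (einterval (ereal t) \<infinity>) f"
      unfolding set_integrable_def using assms(3) by (intro integrable_mult_indicator) auto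
    show "((F \<circ> real_of_ereal) \<longlongrightarrow> F t) (at_right (ereal t))"
      unfolding ereal_tendsto_simps1
      using assms(1) DERIV_isCont isCont_def tendsto_mono at_le by (metis at_right_to_0 order_refl top_greatest)
    show "((F \<circ> real_of_ereal) \<longlongrightarrow> L) (at_left \<infinity>)"
      unfolding ereal_tendsto_simps1 using assms(4) .
  qed (use assms in \<open>auto simp: has_real_derivative_iff_has_vector_derivative[symmetric] continuous_on_eq_continuous_at\<close>)
  then show ?thesis by (simp add: interval_integral_to_infinity_eq)
qed

lemma set_int_Iio:
  fixes F f :: "real \<Rightarrow> real"
  assumes "\<And>x. (F has_real_derivative f x) (at x)" "continuous_on UNIV f" "integrable lborel f"
    "(F \<longlongrightarrow> L) at_bot"
  shows "(LBINT x:{..<t}. f x) = F t - L"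
proof -
  have "(LBINT x=-\<infinity>..ereal t. f x) = F t - L"
  proof (rule interval_integral_FTC_integrable)
    show "set_integrable lborel (einterval (-\<infinity>) (ereal t)) f"
      unfolding set_integrable_def using assms(3) by (intro integrable_mult_indicator) auto
    show "((F \<circ> real_of_ereal) \<longlongrightarrow> F t) (at_left (ereal t))"
      unfolding ereal_tendsto_simps1
      using assms(1) DERIV_isCont isCont_def tendsto_mono at_le by (metis at_left_minus order_refl top_greatest)
    show "((F \<circ> real_of_ereal) \<longlongrightarrow> L) (at_right (-\<infinity>))"
      unfolding ereal_tendsto_simps1 using assms(4) .
  qed (use assms in \<open>auto simp: has_real_derivative_iff_has_vector_derivative[symmetric] continuous_on_eq_continuous_at\<close>)
  then show ?thesis by (simp add: interval_lebesgue_integral_def)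
qed

definition q :: "real \<Rightarrow> real \<Rightarrow> real" where "q a c = Phi (a - c) + Phi (- a - c)"
definition T :: "real \<Rightarrow> real \<Rightarrow> real" where "T t c = (1 + c\<^sup>2) * (1 - Phi t) + (t - 2 * c) * gd t"
definition m :: "real \<Rightarrow> real \<Rightarrow> real" where
  "m a c = T (c - a) c + T (c + a) c + a\<^sup>2 * (Phi (c - a) - Phi (- c - a))"

lemma DERIV_T: "((\<lambda>z. T z c) has_real_derivative (- ((z - c)\<^sup>2 * gd z))) (at z)"
  unfolding T_def
  by (auto intro!: derivative_eq_intros simp: algebra_simps power2_eq_square)

lemma T_top: "((\<lambda>z. T z c) \<longlongrightarrow> 0) at_top"
proof -
  have "((\<lambda>z. (1 + c\<^sup>2) * (1 - Phi z) + (1 * z + (- 2 * c)) * gd z) \<longlongrightarrow> (1 + c\<^sup>2) * (1 - 1) + 0) at_top"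
    by (intro tendsto_intros Phi_at_top gd_lim_top)
  then show ?thesis unfolding T_def by simp
qed

lemma T_bot: "((\<lambda>z. T (- z) c) \<longlongrightarrow> 0) at_bot"
proof -
  have "((\<lambda>z. (1 + c\<^sup>2) * Phi z + ((- 1) * z + (- 2 * c)) * gd z) \<longlongrightarrow> (1 + c\<^sup>2) * 0 + 0) at_bot"
    by (intro tendsto_intros Phi_at_bot gd_lim_bot)
  then show ?thesis unfolding T_def by (simp add: Phi_neg gd_even)
qed

lemma integrable_gd_poly2: "integrable lborel (\<lambda>z. gd z * (z + b)\<^sup>2)"
proof -
  have "integrable lborel (\<lambda>z. gd z * z^2 + 2 * b * (gd z * z^1) + b\<^sup>2 * (gd z * z^0))"
    by (intro Bochner_Integration.integrable_add integrable_mult_right integrable_std_normal_moment)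
  then show ?thesis by (simp add: algebra_simps power2_eq_square)
qed

lemma I1: "(LBINT z:{t<..}. gd z * (z - c)\<^sup>2) = T t c"
proof -
  have "(LBINT z:{t<..}. gd z * (z - c)\<^sup>2) = 0 - (- T t c)"
  proof (rule set_int_Ioi)
    show "((\<lambda>z. - T z c) has_real_derivative gd x * (x - c)\<^sup>2) (at x)" for x
      using DERIV_minus[OF DERIV_T[of c x]] by (simp add: mult.commute)
    show "continuous_on UNIV (\<lambda>x. gd x * (x - c)\<^sup>2)" by (intro continuous_intros)
    show "integrable lborel (\<lambda>x. gd x * (x - c)\<^sup>2)" using integrable_gd_poly2[of "-c"] by simp
    show "((\<lambda>z. - T z c) \<longlongrightarrow> 0) at_top" using tendsto_minus[OF T_top, of c] by simp
  qed
  then show ?thesis by simp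
qed

lemma I2: "(LBINT z:{..<s}. gd z * (z + c)\<^sup>2) = T (- s) c"
proof -
  have "(LBINT z:{..<s}. gd z * (z + c)\<^sup>2) = T (- s) c - 0"
  proof (rule set_int_Iio)
    show "((\<lambda>z. T (- z) c) has_real_derivative gd x * (x + c)\<^sup>2) (at x)" for x
      unfolding T_def by (auto intro!: derivative_eq_intros simp: gd_even power2_eq_square algebra_simps)
    show "continuous_on UNIV (\<lambda>x. gd x * (x + c)\<^sup>2)" by (intro continuous_intros)
    show "integrable lborel (\<lambda>x. gd x * (x + c)\<^sup>2)" using integrable_gd_poly2[of "c"] by simp
    show "((\<lambda>z. T (- z) c) \<longlongrightarrow> 0) at_bot" by (rule T_bot)
  qed
  then show ?thesis by simp
qed

lemma measure_N01_single: "measure N01 {s} = 0"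
proof -
  have "(LBINT x:{s}. gd x) = 0"
    unfolding set_lebesgue_integral_def
    by (rule integral_eq_zero_AE) (use AE_lborel_singleton[of s] in \<open>auto elim!: eventually_mono\<close>)
  then show ?thesis by (simp add: measure_N01)
qed

lemma measure_N01_Iio: "measure N01 {..<s} = Phi s"
proof -
  interpret prob_space N01 by (rule prob_N01)
  have "{..s} = {..<s} \<union> {s}" by auto
  then have "Phi s = measure N01 ({..<s} \<union> {s})" unfolding Phi_def by simp
  also have "\<dots> = measure N01 {..<s}"
    by (subst finite_measure_Union) (auto simp: measure_N01_single)
  finally show ?thesis by simp
qed

lemma measure_N01_Ioi: "measure N01 {t<..} = 1 - Phi t"
proof -
  interpret prob_space N01 by (rule prob_N01)
  have "measure N01 {t<..} = measure N01 (UNIV - {..t})" by (metis Compl_eq_Diff_UNIV Compl_atMost)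
  also have "\<dots> = 1 - Phi t" unfolding Phi_def using prob_compl[of "{..t}"] by simp
  finally show ?thesis .
qed

lemma measure_N01_Icc: "s \<le> t \<Longrightarrow> measure N01 {s..t} = Phi t - Phi s"
proof -
  interpret prob_space N01 by (rule prob_N01)
  assume st: "s \<le> t"
  have "Phi t = measure N01 ({..<s} \<union> {s..t})" unfolding Phi_def using st by (simp add: ivl_disj_un)
  also have "\<dots> = Phi s + measure N01 {s..t}"
    by (subst finite_measure_Union) (auto simp: measure_N01_Iio)
  finally show ?thesis by simp
qed

lemma q_measure: assumes "c \<ge> 0" shows "measure N01 {z. c < \<bar>a + z\<bar>} = q a c"
proof -
  interpret prob_space N01 by (rule prob_N01)
  have "{z. c < \<bar>a + z\<bar>} = {c - a<..} \<union> {..< - c - a}" by auto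
  then have "measure N01 {z. c < \<bar>a + z\<bar>} = measure N01 ({c - a<..} \<union> {..< - c - a})" by simp
  also have "\<dots> = measure N01 {c - a<..} + measure N01 {..< - c - a}"
    using assms by (subst finite_measure_Union) auto
  also have "\<dots> = q a c"
  proof -
    have "- c - a = - a - c" by simp
    then show ?thesis by (simp add: measure_N01_Iio measure_N01_Ioi q_def Phi_neg[symmetric]) (smt (verit))
  qed
  finally show ?thesis .
qed

lemma soft_thresh_cases: assumes "c \<ge> 0"
  shows "(soft_thresh (a + z) c - a)\<^sup>2 =
    indicator {c - a<..} z * (z - c)\<^sup>2 + indicator {..< - c - a} z * (z + c)\<^sup>2
    + indicator {- c - a..c - a} z * a\<^sup>2"
  using assms by (auto simp: soft_thresh_def indicator_def sgn_if abs_if max_def power2_eq_square algebra_simps)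

lemma set_integrable_gd_poly2: "set_integrable lborel A (\<lambda>z. gd z * (z + b)\<^sup>2)" if "A \<in> sets borel"
  unfolding set_integrable_def using that integrable_gd_poly2[of b] by (intro integrable_mult_indicator) auto

lemma m_integral: assumes "c \<ge> 0"
  shows "integral\<^sup>L N01 (\<lambda>z. (soft_thresh (a + z) c - a)\<^sup>2) = m a c"
proof -
  have "integral\<^sup>L N01 (\<lambda>z. (soft_thresh (a + z) c - a)\<^sup>2)
     = (\<integral>z. gd z * (soft_thresh (a + z) c - a)\<^sup>2 \<partial>lborel)"
    unfolding N01_def by (subst integral_density) (auto simp: soft_thresh_def[abs_def])
  also have "\<dots> = (\<integral>z. indicator {c - a<..} z * (gd z * (z - c)\<^sup>2) + indicator {..< - c - a} z * (gd z * (z + c)\<^sup>2)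
     + a\<^sup>2 * (indicator {- c - a..c - a} z * gd z) \<partial>lborel)"
    by (intro Bochner_Integration.integral_cong refl) (simp only: soft_thresh_cases[OF assms], simp add: algebra_simps)
  also have "\<dots> = (LBINT z:{c - a<..}. gd z * (z - c)\<^sup>2) + (LBINT z:{..< - c - a}. gd z * (z + c)\<^sup>2)
     + a\<^sup>2 * (LBINT z:{- c - a..c - a}. gd z)"
  proof -
    have i1: "integrable lborel (\<lambda>z. indicator {c - a<..} z * (gd z * (z - c)\<^sup>2))"
      using set_integrable_gd_poly2[of "{c - a<..}" "-c"] by (simp add: set_integrable_def)
    have i2: "integrable lborel (\<lambda>z. indicator {..< - c - a} z * (gd z * (z + c)\<^sup>2))"
      using set_integrable_gd_poly2[of "{..< - c - a}" "c"] by (simp add: set_integrable_def)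
    have i3: "integrable lborel (\<lambda>z. indicator {- c - a..c - a} z * gd z)"
      using integrable_mult_indicator[of "{- c - a..c - a}" lborel gd] by (simp add: mult.commute)
    show ?thesis using i1 i2 i3
      by (simp add: set_lebesgue_integral_def)
  qed
  also have "\<dots> = m a c"
    using assms by (simp add: I1 I2 measure_N01[symmetric] measure_N01_Icc m_def add.commute)
  finally show ?thesis .
qed


lemma soft_thresh_meas[measurable]:
  "f \<in> borel_measurable M \<Longrightarrow> g \<in> borel_measurable M \<Longrightarrow> (\<lambda>x. soft_thresh (f x) (g x)) \<in> borel_measurable M"
proof -
  assume [measurable]: "f \<in> borel_measurable M" "g \<in> borel_measurable M"
  have [measurable]: "(\<lambda>x. sgn (f x)) \<in> borel_measurable M"
    by (rule measurable_compose[OF _ borel_measurable_sgn]) simp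
  show ?thesis unfolding soft_thresh_def by measurable
qed

lemma soft_thresh_scale: assumes "s > 0" shows "soft_thresh (s * x) (s * c) = s * soft_thresh x c"
proof -
  have "max (\<bar>s * x\<bar> - s * c) 0 = s * max (\<bar>x\<bar> - c) 0"
    using assms by (simp add: abs_mult max_mult_distrib_left right_diff_distrib)
  moreover have "sgn (s * x) = sgn x" using assms by (simp add: sgn_mult)
  ultimately show ?thesis by (simp add: soft_thresh_def)
qed

lemma soft_thresh_dev: "\<tau> \<ge> 0 \<Longrightarrow> \<bar>soft_thresh x \<tau> - x\<bar> \<le> \<tau>"
  by (auto simp: soft_thresh_def sgn_if max_def abs_if)

lemma soft_thresh_pos: "\<tau> \<ge> 0 \<Longrightarrow> (\<bar>soft_thresh x \<tau>\<bar> > 0) = (\<bar>x\<bar> > \<tau>)"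
  by (auto simp: soft_thresh_def sgn_if max_def abs_if)

lemma integrable_N01_sq: "integrable N01 (\<lambda>z. z\<^sup>2)"
  unfolding N01_def
  using integrable_std_normal_moment[of 2] by (subst integrable_density) auto

definition Mz2 :: real where "Mz2 = integral\<^sup>L N01 (\<lambda>z. z\<^sup>2)"

lemma sq_dev_bound: assumes "c \<ge> 0"
  shows "(soft_thresh (a + z) c - a)\<^sup>2 \<le> 2 * c\<^sup>2 + 2 * z\<^sup>2"
proof -
  have "\<bar>soft_thresh (a + z) c - a\<bar> \<le> c + \<bar>z\<bar>"
    using soft_thresh_dev[OF assms, of "a + z"] by linarith
  then have "(soft_thresh (a + z) c - a)\<^sup>2 \<le> (c + \<bar>z\<bar>)\<^sup>2"
    by (metis abs_ge_zero abs_le_square_iff abs_of_nonneg add_nonneg_nonneg assms power2_abs)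
  also have "\<dots> \<le> 2 * c\<^sup>2 + 2 * z\<^sup>2"
  proof -
    have "0 \<le> (c - \<bar>z\<bar>)\<^sup>2" by simp
    then show ?thesis by (simp add: power2_eq_square algebra_simps abs_mult_self_eq)
  qed
  finally show ?thesis .
qed

lemma integrable_sq_dev: assumes "c \<ge> 0"
  shows "integrable N01 (\<lambda>z. (soft_thresh (a + z) c - a)\<^sup>2)"
proof (rule Bochner_Integration.integrable_bound)
  show "integrable N01 (\<lambda>z. 2 * c\<^sup>2 + 2 * z\<^sup>2)"
  proof -
    interpret prob_space N01 by (rule prob_N01)
    show ?thesis using integrable_N01_sq
      by (intro Bochner_Integration.integrable_add integrable_mult_right) auto
  qed
  show "AE x in N01. norm ((soft_thresh (a + x) c - a)\<^sup>2) \<le> norm (2 * c\<^sup>2 + 2 * x\<^sup>2)"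
    using sq_dev_bound[OF assms] by auto
qed (simp add: N01_def)

lemma m_bounds: assumes "c \<ge> 0" shows "0 \<le> m a c" "m a c \<le> 2 * c\<^sup>2 + 2 * Mz2"
proof -
  interpret prob_space N01 by (rule prob_N01)
  show "0 \<le> m a c" using m_integral[OF assms, symmetric, of a] by simp
  have "m a c \<le> integral\<^sup>L N01 (\<lambda>z. 2 * c\<^sup>2 + 2 * z\<^sup>2)"
    unfolding m_integral[OF assms, symmetric]
    using integrable_sq_dev[OF assms] integrable_N01_sq sq_dev_bound[OF assms]
    by (intro integral_mono) auto
  also have "\<dots> = 2 * c\<^sup>2 + 2 * Mz2"
    using integrable_N01_sq prob_space by (simp add: Mz2_def)
  finally show "m a c \<le> 2 * c\<^sup>2 + 2 * Mz2" .
qed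

lemma inner_E: assumes "s > 0" "c \<ge> 0"
  shows "integral\<^sup>L N01 (\<lambda>z. (soft_thresh (b + s * z) (c * s) - b)\<^sup>2) = s\<^sup>2 * m (b / s) c"
proof -
  have "(soft_thresh (b + s * z) (c * s) - b)\<^sup>2 = s\<^sup>2 * (soft_thresh (b / s + z) c - b / s)\<^sup>2" for z
  proof -
    have "soft_thresh (b + s * z) (c * s) = s * soft_thresh (b / s + z) c"
      using soft_thresh_scale[OF assms(1), of "b / s + z" c] assms(1)
      by (simp add: algebra_simps)
    then show ?thesis using assms(1) by (simp add: power2_eq_square field_simps)
  qed
  then show ?thesis by (simp add: m_integral[OF assms(2)])
qed


lemma sq_scale: assumes "s > 0"
  shows "(soft_thresh (b + s * z) (c * s) - b)\<^sup>2 = s\<^sup>2 * (soft_thresh (b / s + z) c - b / s)\<^sup>2"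
proof -
  have "soft_thresh (b + s * z) (c * s) = s * soft_thresh (b / s + z) c"
    using soft_thresh_scale[OF assms(1), of "b / s + z" c] assms(1)
    by (simp add: algebra_simps)
  then show ?thesis using assms(1) by (simp add: power2_eq_square field_simps)
qed

context
  fixes p :: "real measure"
  assumes prob: "prob_space p" and sets_p[measurable_cong]: "sets p = sets borel"
begin

lemma space_p[simp]: "space p = UNIV"
  using sets_eq_imp_space_eq[OF sets_p] by simp

lemma pps: "pair_prob_space p N01"
  by (simp add: pair_prob_space_def pair_sigma_finite_def prob prob_N01 prob_space_imp_sigma_finite)

lemma E_BZ_eq: assumes s: "s > 0" and c: "c \<ge> 0"
  shows "E_BZ p (\<lambda>b z. (soft_thresh (b + s * z) (c * s) - b)\<^sup>2) = s\<^sup>2 * (\<integral>b. m (b / s) c \<partial>p)"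
proof -
  interpret pair_prob_space p N01 by (rule pps)
  let ?f = "\<lambda>(b, z). (soft_thresh (b + s * z) (c * s) - b)\<^sup>2"
  have meas[measurable]: "?f \<in> borel_measurable (p \<Otimes>\<^sub>M N01)" by measurable
  have inner: "(\<integral>z. (soft_thresh (b + s * z) (c * s) - b)\<^sup>2 \<partial>N01) = s\<^sup>2 * m (b / s) c" for b
    using inner_E[OF s c] by simp
  have int: "integrable (p \<Otimes>\<^sub>M N01) ?f"
  proof (rule Fubini_integrable[OF meas])
    show "integrable p (\<lambda>x. \<integral>y. norm (?f (x, y)) \<partial>N01)"
    proof (rule M1.integrable_const_bound[where B="s\<^sup>2 * (2 * c\<^sup>2 + 2 * Mz2)"])
      show "AE x in p. norm (\<integral>y. norm (?f (x, y)) \<partial>N01) \<le> s\<^sup>2 * (2 * c\<^sup>2 + 2 * Mz2)"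
        using inner m_bounds[OF c] by (auto intro!: mult_left_mono)
    qed measurable
    show "AE x in p. integrable N01 (\<lambda>y. ?f (x, y))"
      using integrable_sq_dev[OF c] by (auto simp: sq_scale[OF s])
  qed
  have "E_BZ p (\<lambda>b z. (soft_thresh (b + s * z) (c * s) - b)\<^sup>2) = integral\<^sup>L (p \<Otimes>\<^sub>M N01) ?f"
    by (simp add: E_BZ_def)
  also have "\<dots> = (\<integral>b. (\<integral>z. ?f (b, z) \<partial>N01) \<partial>p)"
    by (rule integral_fst'[OF int, symmetric])
  also have "\<dots> = s\<^sup>2 * (\<integral>b. m (b / s) c \<partial>p)"
    by (simp add: inner)
  finally show ?thesis .
qed

lemma P_BZ_eq: assumes s: "s > 0" and c: "c \<ge> 0"
  shows "P_BZ p (\<lambda>b z. \<bar>soft_thresh (b + s * z) (c * s)\<bar> > 0) = (\<integral>b. q (b / s) c \<partial>p)"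
proof -
  interpret pair_prob_space p N01 by (rule pps)
  let ?S = "{(b, z). \<bar>soft_thresh (b + s * z) (c * s)\<bar> > 0}"
  have S[measurable]: "?S \<in> sets (p \<Otimes>\<^sub>M N01)"
  proof -
    have "?S = {x \<in> space (p \<Otimes>\<^sub>M N01). \<bar>soft_thresh (fst x + s * snd x) (c * s)\<bar> > 0}"
      by (auto simp: space_pair_measure)
    also have "\<dots> \<in> sets (p \<Otimes>\<^sub>M N01)" by measurable
    finally show ?thesis .
  qed
  have slice: "(\<integral>z. indicator ?S (b, z) \<partial>N01) = q (b / s) c" for b
  proof -
    have mem: "((b, z) \<in> ?S) = (z \<in> {z. c < \<bar>b / s + z\<bar>})" for z
    proof -
      have "(\<bar>soft_thresh (b + s * z) (c * s)\<bar> > 0) = (c * s < \<bar>b + s * z\<bar>)"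
        using soft_thresh_pos[of "c * s"] c s by simp
      also have "\<dots> = (c < \<bar>b / s + z\<bar>)"
      proof -
        have "\<bar>b + s * z\<bar> = s * \<bar>b / s + z\<bar>" using s by (simp add: field_simps abs_mult[symmetric])
        then show ?thesis using s by simp
      qed
      finally show ?thesis by simp
    qed
    have "(\<integral>z. indicator ?S (b, z) \<partial>N01) = (\<integral>z. indicator {z. c < \<bar>b / s + z\<bar>} z \<partial>N01)"
      by (rule Bochner_Integration.integral_cong[OF refl]) (simp only: indicator_def mem)
    also have "\<dots> = measure N01 {z. c < \<bar>b / s + z\<bar>}"
      by (simp add: M2.emeasure_eq_measure)
    also have "\<dots> = q (b / s) c" by (rule q_measure[OF c])
    finally show ?thesis .
  qed
  have "P_BZ p (\<lambda>b z. \<bar>soft_thresh (b + s * z) (c * s)\<bar> > 0) = measure (p \<Otimes>\<^sub>M N01) ?S"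
    by (simp add: P_BZ_def)
  also have "\<dots> = integral\<^sup>L (p \<Otimes>\<^sub>M N01) (indicator ?S)"
    using S by (simp add: space_pair_measure)
  also have "\<dots> = (\<integral>b. (\<integral>z. indicator ?S (b, z) \<partial>N01) \<partial>p)"
    by (rule integral_fst'[symmetric]) (intro integrable_real_indicator S, simp add: less_top[symmetric])
  also have "\<dots> = (\<integral>b. q (b / s) c \<partial>p)"
    by (rule Bochner_Integration.integral_cong[OF refl]) (rule slice)
  finally show ?thesis .
qed

end


lemma mvt_ball:
  fixes g g' :: "real \<Rightarrow> real"
  assumes der: "\<And>t. \<bar>t - x\<bar> < d \<Longrightarrow> (g has_real_derivative g' t) (at t)"
    and y: "\<bar>y - x\<bar> < d" "y \<noteq> x"
  shows "\<exists>\<xi>. \<bar>\<xi> - x\<bar> < \<bar>y - x\<bar> \<and> g y - g x = (y - x) * g' \<xi>"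
proof (cases "x < y")
  case True
  have "\<exists>z. x < z \<and> z < y \<and> g y - g x = (y - x) * g' z"
    by (rule MVT2[OF True]) (use y in \<open>intro der, auto\<close>)
  then obtain z where "x < z" "z < y" "g y - g x = (y - x) * g' z" by blast
  then show ?thesis by (intro exI[of _ z]) auto
next
  case False
  then have yx: "y < x" using y by auto
  have "\<exists>z. y < z \<and> z < x \<and> g x - g y = (x - y) * g' z"
    by (rule MVT2[OF yx]) (use y in \<open>intro der, auto\<close>)
  then obtain z where "y < z" "z < x" "g x - g y = (x - y) * g' z" by blast
  then show ?thesis
    by (intro exI[of _ z]) (auto simp: algebra_simps abs_if)
qed

lemma DERIV_integral:
  fixes f f' :: "'a \<Rightarrow> real \<Rightarrow> real" and w :: "'a \<Rightarrow> real"
  assumes M: "finite_measure M"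
    and d: "d > 0"
    and meas: "\<And>t. (\<lambda>b. f b t) \<in> borel_measurable M"
    and meas': "(\<lambda>b. f' b x) \<in> borel_measurable M"
    and intf: "\<And>t. \<bar>t - x\<bar> < d \<Longrightarrow> integrable M (\<lambda>b. f b t)"
    and der: "\<And>b t. \<bar>t - x\<bar> < d \<Longrightarrow> ((\<lambda>t. f b t) has_real_derivative f' b t) (at t)"
    and bnd: "\<And>b t. \<bar>t - x\<bar> < d \<Longrightarrow> \<bar>f' b t\<bar> \<le> w b"
    and intw: "integrable M w"
  shows "((\<lambda>t. \<integral>b. f b t \<partial>M) has_real_derivative (\<integral>b. f' b x \<partial>M)) (at x)"
  unfolding has_field_derivative_iff tendsto_at_iff_sequentially
proof (intro allI impI)
  fix X :: "nat \<Rightarrow> real"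
  assume Xne: "\<forall>i. X i \<in> UNIV - {x}" and X: "X \<longlonglongrightarrow> x"
  define s where "s n b = (if \<bar>X n - x\<bar> < d then (f b (X n) - f b x) / (X n - x) else f' b x)" for n b
  have ev: "eventually (\<lambda>n. \<bar>X n - x\<bar> < d) sequentially"
  proof -
    have "eventually (\<lambda>n. dist (X n) x < d) sequentially" using X d by (rule tendstoD)
    then show ?thesis by (simp add: dist_real_def)
  qed
  have lim: "(\<lambda>n. s n b) \<longlonglongrightarrow> f' b x" for b
  proof -
    have "((\<lambda>y. (f b y - f b x) / (y - x)) \<longlongrightarrow> f' b x) (at x)"
      using der[of x b] d by (simp add: has_field_derivative_iff)
    then have "((\<lambda>y. (f b y - f b x) / (y - x)) \<circ> X) \<longlonglongrightarrow> f' b x"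
      using Xne X by (simp add: tendsto_at_iff_sequentially)
    then show ?thesis
      by (rule Lim_transform_eventually) (use ev in \<open>auto elim!: eventually_mono simp: s_def\<close>)
  qed
  have bound: "\<bar>s n b\<bar> \<le> w b" for n b
  proof (cases "\<bar>X n - x\<bar> < d")
    case True
    have "X n \<noteq> x" using Xne by auto
    then obtain \<xi> where xi: "\<bar>\<xi> - x\<bar> < \<bar>X n - x\<bar>" "f b (X n) - f b x = (X n - x) * f' b \<xi>"
      using mvt_ball[of x d "\<lambda>t. f b t" "\<lambda>t. f' b t" "X n"] der True by blast
    then have "s n b = f' b \<xi>" using True \<open>X n \<noteq> x\<close> by (simp add: s_def)
    then show ?thesis using bnd[of \<xi> b] xi True by simp
  next
    case False then show ?thesis using bnd[of x b] d by (simp add: s_def)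
  qed
  have smeas: "(\<lambda>b. s n b) \<in> borel_measurable M" for n
    unfolding s_def using meas meas' by (cases "\<bar>X n - x\<bar> < d") auto
  have "(\<lambda>n. \<integral>b. s n b \<partial>M) \<longlonglongrightarrow> (\<integral>b. f' b x \<partial>M)"
    by (rule integral_dominated_convergence[where w=w, OF meas' smeas intw]) (auto intro!: AE_I2 simp: lim bound)
  then show "((\<lambda>y. ((\<integral>b. f b y \<partial>M) - (\<integral>b. f b x \<partial>M)) / (y - x)) \<circ> X) \<longlonglongrightarrow> (\<integral>b. f' b x \<partial>M)"
  proof (rule Lim_transform_eventually)
    show "eventually (\<lambda>n. (\<integral>b. s n b \<partial>M) = ((\<lambda>y. ((\<integral>b. f b y \<partial>M) - (\<integral>b. f b x \<partial>M)) / (y - x)) \<circ> X) n) sequentially"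
      using ev
    proof (rule eventually_mono)
      fix n assume n: "\<bar>X n - x\<bar> < d"
      have "(\<integral>b. s n b \<partial>M) = (\<integral>b. (f b (X n) - f b x) / (X n - x) \<partial>M)"
        using n by (simp add: s_def)
      also have "\<dots> = ((\<integral>b. f b (X n) \<partial>M) - (\<integral>b. f b x \<partial>M)) / (X n - x)"
        using intf[OF n] intf[of x] d by simp
      finally show "(\<integral>b. s n b \<partial>M) = ((\<lambda>y. ((\<integral>b. f b y \<partial>M) - (\<integral>b. f b x \<partial>M)) / (y - x)) \<circ> X) n"
        by simp
    qed
  qed
qed

lemma isCont_integral:
  fixes g :: "'a \<Rightarrow> 'b::metric_space \<Rightarrow> real" and w :: "'a \<Rightarrow> real"
  assumes e: "e > 0"
    and meas: "\<And>y. (\<lambda>b. g b y) \<in> borel_measurable M"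
    and cont: "\<And>b. isCont (g b) y0"
    and bnd: "\<And>b y. dist y y0 < e \<Longrightarrow> \<bar>g b y\<bar> \<le> w b"
    and intw: "integrable M w"
  shows "isCont (\<lambda>y. \<integral>b. g b y \<partial>M) y0"
  unfolding continuous_at_sequentially comp_def
proof (intro allI impI)
  fix X :: "nat \<Rightarrow> 'b" assume X: "X \<longlonglongrightarrow> y0"
  define s where "s n b = (if dist (X n) y0 < e then g b (X n) else g b y0)" for n b
  have ev: "eventually (\<lambda>n. dist (X n) y0 < e) sequentially" using X e by (rule tendstoD)
  have lim: "(\<lambda>n. s n b) \<longlonglongrightarrow> g b y0" for b
  proof -
    have "(\<lambda>n. g b (X n)) \<longlonglongrightarrow> g b y0"
      using cont[of b] X by (simp add: continuous_at_sequentially comp_def)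
    then show ?thesis
      by (rule Lim_transform_eventually) (use ev in \<open>auto elim!: eventually_mono simp: s_def\<close>)
  qed
  have bound: "\<bar>s n b\<bar> \<le> w b" for n b
    using bnd[of "X n" b] bnd[of y0 b] e by (auto simp: s_def)
  have smeas: "(\<lambda>b. s n b) \<in> borel_measurable M" for n
    unfolding s_def using meas by (cases "dist (X n) y0 < e") auto
  have "(\<lambda>n. \<integral>b. s n b \<partial>M) \<longlonglongrightarrow> (\<integral>b. g b y0 \<partial>M)"
    by (rule integral_dominated_convergence[where w=w, OF meas smeas intw]) (auto intro!: AE_I2 simp: lim bound)
  then show "(\<lambda>n. \<integral>b. g b (X n) \<partial>M) \<longlonglongrightarrow> (\<integral>b. g b y0 \<partial>M)"
    by (rule Lim_transform_eventually) (use ev in \<open>auto elim!: eventually_mono simp: s_def\<close>)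
qed


lemma G_lemma:
  fixes F Fu :: "real \<Rightarrow> real \<Rightarrow> real" and u :: "real \<Rightarrow> real"
  assumes d: "d > 0"
    and der: "\<And>v c. \<bar>v - u0\<bar> < d \<Longrightarrow> \<bar>c - c0\<bar> < d \<Longrightarrow> ((\<lambda>v. F v c) has_real_derivative Fu v c) (at v)"
    and cont: "isCont (\<lambda>x. Fu (fst x) (snd x)) (u0, c0)"
    and ulim: "(u \<longlongrightarrow> u0) (at c0)"
  shows "((\<lambda>c. if u c = u0 then Fu u0 c0 else (F (u c) c - F u0 c) / (u c - u0)) \<longlongrightarrow> Fu u0 c0) (at c0)"
proof (rule tendstoI)
  fix e :: real assume e: "e > 0"
  have "eventually (\<lambda>x. dist (Fu (fst x) (snd x)) (Fu u0 c0) < e) (at (u0, c0))"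
    using cont e unfolding isCont_def by (simp add: tendstoD)
  then obtain del where del: "del > 0" and
    dl0: "\<And>x. x \<noteq> (u0, c0) \<Longrightarrow> dist x (u0, c0) < del \<Longrightarrow> dist (Fu (fst x) (snd x)) (Fu u0 c0) < e"
    unfolding eventually_at by blast
  have dl: "dist (Fu (fst x) (snd x)) (Fu u0 c0) < e" if "dist x (u0, c0) < del" for x
    using dl0[OF _ that] e by (cases "x = (u0, c0)") auto
  define r where "r = min d (del / 2)"
  have r: "r > 0" using d del by (simp add: r_def)
  have ev1: "eventually (\<lambda>c. dist (u c) u0 < r) (at c0)" using ulim r by (rule tendstoD)
  have ev2: "eventually (\<lambda>c. dist c c0 < r) (at c0)" using r eventually_at by blast
  show "eventually (\<lambda>c. dist (if u c = u0 then Fu u0 c0 else (F (u c) c - F u0 c) / (u c - u0)) (Fu u0 c0) < e) (at c0)"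
    using ev1 ev2
  proof eventually_elim
    case (elim c)
    show ?case
    proof (cases "u c = u0")
      case True then show ?thesis using e by simp
    next
      case False
      have uc: "\<bar>u c - u0\<bar> < d" "\<bar>c - c0\<bar> < d" using elim by (auto simp: r_def dist_real_def)
      obtain \<xi> where xi: "\<bar>\<xi> - u0\<bar> < \<bar>u c - u0\<bar>" "F (u c) c - F u0 c = (u c - u0) * Fu \<xi> c"
        using mvt_ball[of u0 d "\<lambda>v. F v c" "\<lambda>v. Fu v c" "u c"] der uc False by blast
      have "dist (\<xi>, c) (u0, c0) \<le> \<bar>\<xi> - u0\<bar> + \<bar>c - c0\<bar>"
        unfolding dist_Pair_Pair dist_real_def using sqrt_sum_squares_le_sum_abs[of "\<bar>\<xi> - u0\<bar>" "\<bar>c - c0\<bar>"] by simp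
      also have "\<dots> < del" using xi elim by (auto simp: r_def dist_real_def)
      finally have "dist (Fu \<xi> c) (Fu u0 c0) < e" using dl[of "(\<xi>, c)"] by simp
      then show ?thesis using False xi by simp
    qed
  qed
qed

lemma implicit_deriv:
  fixes R Ru :: "real \<Rightarrow> real \<Rightarrow> real" and u :: "real \<Rightarrow> real"
  assumes d: "d > 0"
    and der: "\<And>v c. \<bar>v - u0\<bar> < d \<Longrightarrow> \<bar>c - c0\<bar> < d \<Longrightarrow> ((\<lambda>v. R v c) has_real_derivative Ru v c) (at v)"
    and cont: "isCont (\<lambda>x. Ru (fst x) (snd x)) (u0, c0)"
    and ulim: "(u \<longlongrightarrow> u0) (at c0)" and u0: "u c0 = u0"
    and zero: "eventually (\<lambda>c. R (u c) c = 0) (at c0)" and zero0: "R u0 c0 = 0"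
    and Rc: "((\<lambda>c. R u0 c) has_real_derivative Rc) (at c0)"
    and Ru0: "Ru u0 c0 \<noteq> 0"
  shows "(u has_real_derivative (- Rc / Ru u0 c0)) (at c0)"
proof -
  define G where "G c = (if u c = u0 then Ru u0 c0 else (R (u c) c - R u0 c) / (u c - u0))" for c
  have G: "(G \<longlongrightarrow> Ru u0 c0) (at c0)"
    unfolding G_def by (rule G_lemma[OF d der cont ulim])
  have Gne: "eventually (\<lambda>c. G c \<noteq> 0) (at c0)"
    using G Ru0 tendsto_imp_eventually_ne by blast
  have id: "R (u c) c - R u0 c = G c * (u c - u0)" for c
    by (simp add: G_def)
  have RcL: "((\<lambda>c. (R u0 c - R u0 c0) / (c - c0)) \<longlongrightarrow> Rc) (at c0)"
    using Rc by (simp add: has_field_derivative_iff)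
  have "((\<lambda>c. - ((R u0 c - R u0 c0) / (c - c0)) / G c) \<longlongrightarrow> - Rc / Ru u0 c0) (at c0)"
    by (intro tendsto_intros RcL G Ru0)
  then have "((\<lambda>c. (u c - u c0) / (c - c0)) \<longlongrightarrow> - Rc / Ru u0 c0) (at c0)"
  proof (rule Lim_transform_eventually)
    show "eventually (\<lambda>c. - ((R u0 c - R u0 c0) / (c - c0)) / G c = (u c - u c0) / (c - c0)) (at c0)"
      using zero Gne
    proof eventually_elim
      case (elim c)
      have "R u0 c = - (G c * (u c - u0))" using id[of c] elim by simp
      then show ?case using elim zero0 u0 by (simp add: divide_simps)
    qed
  qed
  then show ?thesis by (simp add: has_field_derivative_iff)
qed

lemma chain_deriv:
  fixes F Fu :: "real \<Rightarrow> real \<Rightarrow> real" and u :: "real \<Rightarrow> real"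
  assumes d: "d > 0"
    and der: "\<And>v c. \<bar>v - u0\<bar> < d \<Longrightarrow> \<bar>c - c0\<bar> < d \<Longrightarrow> ((\<lambda>v. F v c) has_real_derivative Fu v c) (at v)"
    and cont: "isCont (\<lambda>x. Fu (fst x) (snd x)) (u0, c0)"
    and ud: "(u has_real_derivative u') (at c0)" and u0: "u c0 = u0"
    and Fc: "((\<lambda>c. F u0 c) has_real_derivative Fc) (at c0)"
  shows "((\<lambda>c. F (u c) c) has_real_derivative (Fu u0 c0 * u' + Fc)) (at c0)"
proof -
  have ulim: "(u \<longlongrightarrow> u0) (at c0)"
    using DERIV_isCont[OF ud] u0 by (simp add: isCont_def)
  define G where "G c = (if u c = u0 then Fu u0 c0 else (F (u c) c - F u0 c) / (u c - u0))" for c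
  have G: "(G \<longlongrightarrow> Fu u0 c0) (at c0)"
    unfolding G_def by (rule G_lemma[OF d der cont ulim])
  have id: "F (u c) c - F u0 c = G c * (u c - u0)" for c
    by (simp add: G_def)
  have uL: "((\<lambda>c. (u c - u0) / (c - c0)) \<longlongrightarrow> u') (at c0)"
    using ud u0 by (simp add: has_field_derivative_iff)
  have FcL: "((\<lambda>c. (F u0 c - F u0 c0) / (c - c0)) \<longlongrightarrow> Fc) (at c0)"
    using Fc by (simp add: has_field_derivative_iff)
  have "((\<lambda>c. G c * ((u c - u0) / (c - c0)) + (F u0 c - F u0 c0) / (c - c0)) \<longlongrightarrow> Fu u0 c0 * u' + Fc) (at c0)"
    by (intro tendsto_intros G uL FcL)
  then have "((\<lambda>c. (F (u c) c - F (u c0) c0) / (c - c0)) \<longlongrightarrow> Fu u0 c0 * u' + Fc) (at c0)"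
  proof (rule Lim_transform_eventually)
    show "eventually (\<lambda>c. G c * ((u c - u0) / (c - c0)) + (F u0 c - F u0 c0) / (c - c0)
        = (F (u c) c - F (u c0) c0) / (c - c0)) (at c0)"
    proof (rule always_eventually, intro allI)
      fix c
      show "G c * ((u c - u0) / (c - c0)) + (F u0 c - F u0 c0) / (c - c0) = (F (u c) c - F (u c0) c0) / (c - c0)"
        using id[of c] u0 by (simp add: divide_simps)
    qed
  qed
  then show ?thesis by (simp add: has_field_derivative_iff)
qed


lemma Phi_flip1: "Phi (c - a) = 1 - Phi (a - c)"
proof -
  have e: "c - a = - (a - c)" by simp
  show ?thesis by (subst e, rule Phi_neg)
qed

lemma Phi_flip2: "Phi (- c - a) = 1 - Phi (a + c)"
proof -
  have e: "- c - a = - (a + c)" by simp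
  show ?thesis by (subst e, rule Phi_neg)
qed

lemma Phi_flip3: "Phi (- a - c) = 1 - Phi (a + c)"
proof -
  have e: "- a - c = - (a + c)" by simp
  show ?thesis by (subst e, rule Phi_neg)
qed

lemma gd_flip1: "gd (c - a) = gd (a - c)"
proof -
  have e: "c - a = - (a - c)" by simp
  show ?thesis by (subst e, rule gd_even)
qed

lemma gd_flip2: "gd (c + a) = gd (a + c)"
  by (simp add: add.commute)

lemma q_alt: "q a c = Phi (a - c) + 1 - Phi (a + c)"
  unfolding q_def Phi_flip3 by simp

lemma m_alt: "m a c = (1 + c\<^sup>2) * (Phi (a - c) + 1 - Phi (a + c)) - (a + c) * gd (a - c)
    + (a - c) * gd (a + c) + a\<^sup>2 * (Phi (a + c) - Phi (a - c))"
proof -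
  have h1: "T (c - a) c = (1 + c\<^sup>2) * Phi (a - c) - (a + c) * gd (a - c)"
    unfolding T_def Phi_flip1[of c a] gd_flip1[of c a] by (simp add: algebra_simps)
  have h2: "T (c + a) c = (1 + c\<^sup>2) * (1 - Phi (a + c)) + (a - c) * gd (a + c)"
    unfolding T_def gd_flip2[of c a] by (simp add: algebra_simps)
  have h3: "a\<^sup>2 * (Phi (c - a) - Phi (- c - a)) = a\<^sup>2 * (Phi (a + c) - Phi (a - c))"
    unfolding Phi_flip1[of c a] Phi_flip2[of c a] by simp
  show ?thesis unfolding m_def h1 h2 h3 by (simp add: algebra_simps)
qed

definition qa :: "real \<Rightarrow> real \<Rightarrow> real" where "qa a c = gd (a - c) - gd (a + c)"
definition qc :: "real \<Rightarrow> real \<Rightarrow> real" where "qc a c = - (gd (a - c) + gd (a + c))"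
definition ma :: "real \<Rightarrow> real \<Rightarrow> real" where "ma a c = 2 * a * (Phi (a + c) - Phi (a - c))"
definition mc :: "real \<Rightarrow> real \<Rightarrow> real" where "mc a c = 2 * c * q a c - 2 * (gd (a - c) + gd (a + c))"

lemma Dq_v: "((\<lambda>v. q (v * b) c) has_real_derivative b * qa (v * b) c) (at v)"
  unfolding q_alt qa_def
  by (auto intro!: derivative_eq_intros simp: algebra_simps)

lemma Dq_c: "((\<lambda>c. q a c) has_real_derivative qc a c) (at c)"
  unfolding q_alt qc_def
  by (auto intro!: derivative_eq_intros simp: algebra_simps)

lemma Dm_v: "((\<lambda>v. m (v * b) c) has_real_derivative b * ma (v * b) c) (at v)"
  unfolding m_alt ma_def
  by (auto intro!: derivative_eq_intros simp: algebra_simps power2_eq_square)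

lemma Dm_c: "((\<lambda>c. m a c) has_real_derivative mc a c) (at c)"
  unfolding m_alt mc_def q_alt
  by (auto intro!: derivative_eq_intros simp: algebra_simps power2_eq_square)


lemma gd_le1: "gd x \<le> 1"
proof -
  have "gd x \<le> 1 / sqrt (2 * pi)" by (rule gd_le)
  also have "\<dots> \<le> 1" using pi_gt3 by (simp add: real_le_rsqrt)
  finally show ?thesis .
qed

lemma gd_nonneg: "0 \<le> gd x" using gd_pos[of x] by simp

lemma gd_mono_sq: "x\<^sup>2 \<le> y\<^sup>2 \<Longrightarrow> gd y \<le> gd x"
  unfolding gd_def by (intro divide_right_mono) auto

lemma q_bounds: "0 \<le> q a c" "q a c \<le> 2"
  unfolding q_def using Phi_bounds[of "a - c"] Phi_bounds[of "- a - c"] by auto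

lemma qa_bound: "\<bar>qa a c\<bar> \<le> 2"
  unfolding qa_def abs_le_iff using gd_le1[of "a - c"] gd_le1[of "a + c"] gd_nonneg[of "a - c"] gd_nonneg[of "a + c"] by linarith

lemma qc_bound: "\<bar>qc a c\<bar> \<le> 2"
  unfolding qc_def abs_le_iff using gd_le1[of "a - c"] gd_le1[of "a + c"] gd_nonneg[of "a - c"] gd_nonneg[of "a + c"] by linarith

lemma mc_bound: "\<bar>mc a c\<bar> \<le> 4 * \<bar>c\<bar> + 4"
proof -
  have "\<bar>2 * c * q a c\<bar> \<le> 4 * \<bar>c\<bar>"
    using q_bounds[of a c] mult_left_mono[of "q a c" 2 "\<bar>c\<bar>"] by (simp add: abs_mult)
  moreover have aux: "(x::real) \<le> 1 \<Longrightarrow> y \<le> 1 \<Longrightarrow> 0 \<le> x \<Longrightarrow> 0 \<le> y \<Longrightarrow> \<bar>2 * (x + y)\<bar> \<le> 4" for x y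
    by auto
  have "\<bar>2 * (gd (a - c) + gd (a + c))\<bar> \<le> 4"
    by (rule aux[OF gd_le1 gd_le1 gd_nonneg gd_nonneg])
  ultimately show ?thesis unfolding mc_def by linarith
qed

lemma ma_v_bound: "\<bar>b * ma (v * b) c\<bar> \<le> 2 * \<bar>v\<bar> * b\<^sup>2"
proof -
  have "\<bar>Phi (v * b + c) - Phi (v * b - c)\<bar> \<le> 1"
    using Phi_bounds[of "v * b + c"] Phi_bounds[of "v * b - c"] by auto
  then have "\<bar>b * ma (v * b) c\<bar> = 2 * \<bar>v\<bar> * b\<^sup>2 * \<bar>Phi (v * b + c) - Phi (v * b - c)\<bar>"
    by (simp add: ma_def abs_mult power2_eq_square)
  also have "\<dots> \<le> 2 * \<bar>v\<bar> * b\<^sup>2" using \<open>\<bar>_\<bar> \<le> 1\<close> by (simp add: mult_left_le)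
  finally show ?thesis .
qed

lemma key_pos: assumes a: "a \<ge> 0" and c: "c \<ge> 0"
  shows "0 \<le> a * qa a c" "a * qa a c \<le> a\<^sup>2 * (Phi (a + c) - Phi (a - c))"
proof -
  have sq: "(a - t)\<^sup>2 \<le> (a + t)\<^sup>2" if "t \<ge> 0" for t
    using a that by (simp add: power2_eq_square algebra_simps)
  show "0 \<le> a * qa a c"
    unfolding qa_def using gd_mono_sq[OF sq[OF c]] a by simp
  define F where "F t = a * (Phi (a + t) - Phi (a - t)) - (gd (a - t) - gd (a + t))" for t
  have "F 0 \<le> F c"
  proof (rule DERIV_nonneg_imp_nondecreasing[OF c])
    fix t assume t: "0 \<le> t" "t \<le> c"
    have "(F has_real_derivative t * (gd (a - t) - gd (a + t))) (at t)"
      unfolding F_def by (auto intro!: derivative_eq_intros simp: algebra_simps)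
    moreover have "0 \<le> t * (gd (a - t) - gd (a + t))"
      using gd_mono_sq[OF sq[OF t(1)]] t by simp
    ultimately show "\<exists>y. (F has_real_derivative y) (at t) \<and> 0 \<le> y" by blast
  qed
  then have "0 \<le> F c" by (simp add: F_def)
  then have "0 \<le> a * F c" using a by simp
  then show "a * qa a c \<le> a\<^sup>2 * (Phi (a + c) - Phi (a - c))"
    by (simp add: F_def qa_def power2_eq_square algebra_simps)
qed

lemma key: assumes c: "c \<ge> 0"
  shows "0 \<le> a * qa a c" "a * qa a c \<le> a\<^sup>2 * (Phi (a + c) - Phi (a - c))"
proof -
  have "0 \<le> a * qa a c \<and> a * qa a c \<le> a\<^sup>2 * (Phi (a + c) - Phi (a - c))"
  proof (cases "a \<ge> 0")
    case True then show ?thesis using key_pos[OF True c] by simp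
  next
    case False
    then have na: "- a \<ge> 0" by simp
    have e1: "(- a) * qa (- a) c = a * qa a c"
    proof -
      have "gd (- a - c) = gd (a + c)" using gd_even[of "a + c"] by (simp add: algebra_simps del: gd_even)
      moreover have "gd (- a + c) = gd (a - c)" using gd_even[of "a - c"] by simp
      ultimately show ?thesis by (simp add: qa_def algebra_simps)
    qed
    have e2: "Phi (- a + c) - Phi (- a - c) = Phi (a + c) - Phi (a - c)"
    proof -
      have "Phi (- a + c) = 1 - Phi (a - c)" using Phi_neg[of "a - c"] by simp
      moreover have "Phi (- a - c) = 1 - Phi (a + c)" by (rule Phi_flip3)
      ultimately show ?thesis by simp
    qed
    show ?thesis using key_pos[OF na c] e1 e2 by simp
  qed
  then show "0 \<le> a * qa a c" "a * qa a c \<le> a\<^sup>2 * (Phi (a + c) - Phi (a - c))" by auto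
qed

lemma Phi_diff_nonneg: "c \<ge> 0 \<Longrightarrow> 0 \<le> Phi (a + c) - Phi (a - c)"
  using Phi_mono[of "a - c" "a + c"] by simp


lemma isCont_Phi_comp[continuous_intros]: "isCont f x \<Longrightarrow> isCont (\<lambda>x. Phi (f x)) x"
  by (rule isCont_o2[OF _ continuous_Phi])

lemma isCont_gd_comp[continuous_intros]: "isCont f x \<Longrightarrow> isCont (\<lambda>x. gd (f x)) x"
  unfolding gd_def by (intro continuous_intros) auto

context
  fixes p :: "real measure"
  assumes prob: "prob_space p" and sets_p: "sets p = sets borel"
    and sm: "integrable p (\<lambda>b. b\<^sup>2)"
begin

interpretation P: prob_space p by (rule prob)

lemma meas_p: "continuous_on UNIV f \<Longrightarrow> f \<in> borel_measurable p"
  using borel_measurable_continuous_onI measurable_cong_sets[OF sets_p refl] by blast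

lemma int_abs: "integrable p (\<lambda>b. 1 + b\<^sup>2)"
  using sm by simp

lemma abs_le_sq: "\<bar>b\<bar> \<le> 1 + (b::real)\<^sup>2"
proof -
  have "0 \<le> (\<bar>b\<bar> - 1)\<^sup>2" by simp
  then show ?thesis by (simp add: power2_eq_square algebra_simps abs_mult_self_eq)
qed

lemma cont_m: "continuous_on UNIV (\<lambda>b. m (t * b) c)"
  unfolding m_alt by (intro continuous_intros)
lemma cont_q: "continuous_on UNIV (\<lambda>b. q (t * b) c)"
  unfolding q_alt by (intro continuous_intros)
lemma cont_ma: "continuous_on UNIV (\<lambda>b. b * ma (t * b) c)"
  unfolding ma_def by (intro continuous_intros)
lemma cont_qa: "continuous_on UNIV (\<lambda>b. b * qa (t * b) c)"
  unfolding qa_def by (intro continuous_intros)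
lemma cont_mc: "continuous_on UNIV (\<lambda>b. mc (t * b) c)"
  unfolding mc_def q_alt by (intro continuous_intros)
lemma cont_qc: "continuous_on UNIV (\<lambda>b. qc (t * b) c)"
  unfolding qc_def by (intro continuous_intros)

lemma int_m: "c \<ge> 0 \<Longrightarrow> integrable p (\<lambda>b. m (t * b) c)"
  by (rule P.integrable_const_bound[where B="2 * c\<^sup>2 + 2 * Mz2"])
     (use m_bounds in \<open>auto intro: meas_p cont_m\<close>)

lemma int_q: "integrable p (\<lambda>b. q (t * b) c)"
  by (rule P.integrable_const_bound[where B=2]) (use q_bounds in \<open>auto intro: meas_p cont_q\<close>)

lemma D_m_v: assumes "c \<ge> 0"
  shows "((\<lambda>v. \<integral>b. m (v * b) c \<partial>p) has_real_derivative (\<integral>b. b * ma (v0 * b) c \<partial>p)) (at v0)"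
proof (rule DERIV_integral[where d=1 and w="\<lambda>b. 2 * (\<bar>v0\<bar> + 1) * b\<^sup>2"])
  show "finite_measure p" by (rule P.finite_measure_axioms)
  show "\<And>t. (\<lambda>b. m (t * b) c) \<in> borel_measurable p" by (rule meas_p[OF cont_m])
  show "(\<lambda>b. b * ma (v0 * b) c) \<in> borel_measurable p" by (rule meas_p[OF cont_ma])
  show "\<And>t. \<bar>t - v0\<bar> < 1 \<Longrightarrow> integrable p (\<lambda>b. m (t * b) c)" using int_m[OF assms] by blast
  show "\<And>b t. ((\<lambda>t. m (t * b) c) has_real_derivative b * ma (t * b) c) (at t)" by (rule Dm_v)
  show "\<bar>b * ma (t * b) c\<bar> \<le> 2 * (\<bar>v0\<bar> + 1) * b\<^sup>2" if "\<bar>t - v0\<bar> < 1" for b t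
  proof -
    have "\<bar>b * ma (t * b) c\<bar> \<le> 2 * \<bar>t\<bar> * b\<^sup>2" by (rule ma_v_bound)
    also have "\<dots> \<le> 2 * (\<bar>v0\<bar> + 1) * b\<^sup>2" using that by (intro mult_right_mono) auto
    finally show ?thesis .
  qed
  show "integrable p (\<lambda>b. 2 * (\<bar>v0\<bar> + 1) * b\<^sup>2)" using sm by simp
qed simp

lemma D_q_v:
  shows "((\<lambda>v. \<integral>b. q (v * b) c \<partial>p) has_real_derivative (\<integral>b. b * qa (v0 * b) c \<partial>p)) (at v0)"
proof (rule DERIV_integral[where d=1 and w="\<lambda>b. 2 * (1 + b\<^sup>2)"])
  show "finite_measure p" by (rule P.finite_measure_axioms)
  show "\<And>t. (\<lambda>b. q (t * b) c) \<in> borel_measurable p" by (rule meas_p[OF cont_q])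
  show "(\<lambda>b. b * qa (v0 * b) c) \<in> borel_measurable p" by (rule meas_p[OF cont_qa])
  show "\<And>t. \<bar>t - v0\<bar> < 1 \<Longrightarrow> integrable p (\<lambda>b. q (t * b) c)" using int_q by blast
  show "\<And>b t. ((\<lambda>t. q (t * b) c) has_real_derivative b * qa (t * b) c) (at t)" by (rule Dq_v)
  show "\<bar>b * qa (t * b) c\<bar> \<le> 2 * (1 + b\<^sup>2)" for b t
  proof -
    have "\<bar>b * qa (t * b) c\<bar> \<le> \<bar>b\<bar> * 2" unfolding abs_mult by (intro mult_left_mono qa_bound) auto
    moreover have "\<bar>b\<bar> * 2 \<le> 2 * (1 + b\<^sup>2)" using abs_le_sq[of b] by simp
    ultimately show ?thesis by (rule order_trans)
  qed
  show "integrable p (\<lambda>b. 2 * (1 + b\<^sup>2))" using sm by simp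
qed simp

lemma D_m_c: assumes c0: "c0 > 0"
  shows "((\<lambda>c. \<integral>b. m (v * b) c \<partial>p) has_real_derivative (\<integral>b. mc (v * b) c0 \<partial>p)) (at c0)"
proof (rule DERIV_integral[where d=c0 and w="\<lambda>b. 8 * c0 + 4"])
  show "finite_measure p" by (rule P.finite_measure_axioms)
  show "\<And>t. (\<lambda>b. m (v * b) t) \<in> borel_measurable p" by (rule meas_p[OF cont_m])
  show "(\<lambda>b. mc (v * b) c0) \<in> borel_measurable p" by (rule meas_p[OF cont_mc])
  show "\<And>t. \<bar>t - c0\<bar> < c0 \<Longrightarrow> integrable p (\<lambda>b. m (v * b) t)" using int_m by auto
  show "\<And>b t. ((\<lambda>t. m (v * b) t) has_real_derivative mc (v * b) t) (at t)" by (rule Dm_c)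
  show "\<bar>mc (v * b) t\<bar> \<le> 8 * c0 + 4" if "\<bar>t - c0\<bar> < c0" for b t
    using mc_bound[of "v * b" t] that by auto
qed (use c0 in auto)

lemma D_q_c: assumes c0: "c0 > 0"
  shows "((\<lambda>c. \<integral>b. q (v * b) c \<partial>p) has_real_derivative (\<integral>b. qc (v * b) c0 \<partial>p)) (at c0)"
proof (rule DERIV_integral[where d=c0 and w="\<lambda>b. 2"])
  show "finite_measure p" by (rule P.finite_measure_axioms)
  show "\<And>t. (\<lambda>b. q (v * b) t) \<in> borel_measurable p" by (rule meas_p[OF cont_q])
  show "(\<lambda>b. qc (v * b) c0) \<in> borel_measurable p" by (rule meas_p[OF cont_qc])
  show "\<And>t. \<bar>t - c0\<bar> < c0 \<Longrightarrow> integrable p (\<lambda>b. q (v * b) t)" using int_q by auto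
  show "\<And>b t. ((\<lambda>t. q (v * b) t) has_real_derivative qc (v * b) t) (at t)" by (rule Dq_c)
  show "\<bar>qc (v * b) t\<bar> \<le> 2" for b t by (rule qc_bound)
qed (use c0 in auto)

lemma C_ma: "isCont (\<lambda>x. \<integral>b. b * ma (fst x * b) (snd x) \<partial>p) (v0, c0)"
proof (rule isCont_integral[where e=1 and w="\<lambda>b. 2 * (\<bar>v0\<bar> + 1) * b\<^sup>2"])
  show "\<And>y. (\<lambda>b. b * ma (fst y * b) (snd y)) \<in> borel_measurable p" by (rule meas_p[OF cont_ma])
  show "\<And>b. isCont (\<lambda>x. b * ma (fst x * b) (snd x)) (v0, c0)"
    unfolding ma_def by (intro continuous_intros)
  show "\<bar>b * ma (fst y * b) (snd y)\<bar> \<le> 2 * (\<bar>v0\<bar> + 1) * b\<^sup>2" if "dist y (v0, c0) < 1" for b y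
  proof -
    have "\<bar>fst y - v0\<bar> < 1"
      using that dist_fst_le[of y "(v0, c0)"] by (simp add: dist_real_def)
    have "\<bar>b * ma (fst y * b) (snd y)\<bar> \<le> 2 * \<bar>fst y\<bar> * b\<^sup>2" by (rule ma_v_bound)
    also have "\<dots> \<le> 2 * (\<bar>v0\<bar> + 1) * b\<^sup>2" using \<open>\<bar>fst y - v0\<bar> < 1\<close> by (intro mult_right_mono) auto
    finally show ?thesis .
  qed
  show "integrable p (\<lambda>b. 2 * (\<bar>v0\<bar> + 1) * b\<^sup>2)" using sm by simp
qed simp

lemma C_qa: "isCont (\<lambda>x. \<integral>b. b * qa (fst x * b) (snd x) \<partial>p) (v0, c0)"
proof (rule isCont_integral[where e=1 and w="\<lambda>b. 2 * (1 + b\<^sup>2)"])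
  show "\<And>y. (\<lambda>b. b * qa (fst y * b) (snd y)) \<in> borel_measurable p" by (rule meas_p[OF cont_qa])
  show "\<And>b. isCont (\<lambda>x. b * qa (fst x * b) (snd x)) (v0, c0)"
    unfolding qa_def by (intro continuous_intros)
  show "\<bar>b * qa (fst y * b) (snd y)\<bar> \<le> 2 * (1 + b\<^sup>2)" for b y
  proof -
    have "\<bar>b * qa (fst y * b) (snd y)\<bar> \<le> \<bar>b\<bar> * 2" unfolding abs_mult by (intro mult_left_mono qa_bound) auto
    moreover have "\<bar>b\<bar> * 2 \<le> 2 * (1 + b\<^sup>2)" using abs_le_sq[of b] by simp
    ultimately show ?thesis by (rule order_trans)
  qed
  show "integrable p (\<lambda>b. 2 * (1 + b\<^sup>2))" using sm by simp
qed simp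

end


context
  fixes p :: "real measure"
  assumes prob: "prob_space p" and sets_p: "sets p = sets borel"
    and sm: "integrable p (\<lambda>b. b\<^sup>2)"
begin

interpretation P: prob_space p by (rule prob)

lemma int_qa: "integrable p (\<lambda>b. b * qa (v * b) c)"
proof (rule Bochner_Integration.integrable_bound[where f="\<lambda>b. 2 * (1 + b\<^sup>2)"])
  show "integrable p (\<lambda>b. 2 * (1 + b\<^sup>2))" using sm by simp
  show "(\<lambda>b. b * qa (v * b) c) \<in> borel_measurable p" by (rule meas_p[OF prob sets_p sm cont_qa[OF prob sets_p sm]])
  show "AE x in p. norm (x * qa (v * x) c) \<le> norm (2 * (1 + x\<^sup>2))"
  proof (rule AE_I2)
    fix b :: real
    have "\<bar>b * qa (v * b) c\<bar> \<le> \<bar>b\<bar> * 2" unfolding abs_mult by (intro mult_left_mono qa_bound) auto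
    moreover have "\<bar>b\<bar> * 2 \<le> 2 * (1 + b\<^sup>2)" using abs_le_sq[OF prob sets_p sm, of b] by simp
    ultimately show "norm (b * qa (v * b) c) \<le> norm (2 * (1 + b\<^sup>2))" by simp
  qed
qed

lemma int_S: "integrable p (\<lambda>b. b\<^sup>2 * (Phi (v * b + c) - Phi (v * b - c)))"
proof (rule Bochner_Integration.integrable_bound[where f="\<lambda>b. b\<^sup>2"])
  show "integrable p (\<lambda>b. b\<^sup>2)" by (rule sm)
  show "(\<lambda>b. b\<^sup>2 * (Phi (v * b + c) - Phi (v * b - c))) \<in> borel_measurable p"
    by (rule meas_p[OF prob sets_p sm]) (intro continuous_intros)
  show "AE x in p. norm (x\<^sup>2 * (Phi (v * x + c) - Phi (v * x - c))) \<le> norm (x\<^sup>2)"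
  proof (rule AE_I2)
    fix b :: real
    have "\<bar>Phi (v * b + c) - Phi (v * b - c)\<bar> \<le> 1"
      using Phi_bounds[of "v * b + c"] Phi_bounds[of "v * b - c"] by auto
    then show "norm (b\<^sup>2 * (Phi (v * b + c) - Phi (v * b - c))) \<le> norm (b\<^sup>2)"
      by (simp add: abs_mult mult_left_le)
  qed
qed

lemma int_r: "integrable p (\<lambda>b. gd (v * b - c) + gd (v * b + c))"
proof (rule P.integrable_const_bound[where B=2])
  show "AE x in p. norm (gd (v * x - c) + gd (v * x + c)) \<le> 2"
  proof (rule AE_I2)
    fix b
    have "gd (v * b - c) + gd (v * b + c) \<le> 1 + 1" by (rule add_mono[OF gd_le1 gd_le1])
    then show "norm (gd (v * b - c) + gd (v * b + c)) \<le> 2" by (simp add: add_nonneg_nonneg)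
  qed
  show "(\<lambda>b. gd (v * b - c) + gd (v * b + c)) \<in> borel_measurable p"
    by (rule meas_p[OF prob sets_p sm]) (intro continuous_intros)
qed

lemma integral_pos_r: "0 < (\<integral>b. gd (v * b - c) + gd (v * b + c) \<partial>p)"
proof -
  have nn: "0 \<le> (\<integral>b. gd (v * b - c) + gd (v * b + c) \<partial>p)"
    by (intro integral_nonneg_AE AE_I2) (simp add: add_nonneg_nonneg)
  have ne: "(\<integral>b. gd (v * b - c) + gd (v * b + c) \<partial>p) \<noteq> 0"
  proof
    assume "(\<integral>b. gd (v * b - c) + gd (v * b + c) \<partial>p) = 0"
    then have "AE b in p. gd (v * b - c) + gd (v * b + c) = 0"
      using integral_nonneg_eq_0_iff_AE[OF int_r] by (simp add: add_nonneg_nonneg)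
    moreover have "AE b in p. gd (v * b - c) + gd (v * b + c) \<noteq> 0"
      using gd_pos by (intro AE_I2) (smt (verit))
    ultimately have "AE b in p. False" by eventually_elim simp
    then show False by (simp add: P.AE_False)
  qed
  show ?thesis using nn ne by (auto simp: less_le)
qed

end


lemma final_ineq:
  fixes d sz u0 chi A S Er Eq :: real
  assumes d: "d > 0" and sz: "sz > 0" and u0: "u0 > 0" and chi: "chi > 0"
    and A: "0 \<le> A" "A \<le> u0 * S" and S: "0 \<le> S" and Er: "0 < Er" and Eq: "0 \<le> Eq"
  shows "A * (- ((1 / d) * (2 * chi * Eq - 2 * Er)) / (2 * sz * u0 + (1 / d) * (2 * u0 * S))) + - Er < 0"
proof -
  define K where "K = d * sz + S"
  have K: "K > 0" using d sz S by (simp add: K_def add_pos_nonneg)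
  have AK: "A < u0 * K"
  proof -
    have "u0 * S < u0 * K" using u0 d sz by (simp add: K_def)
    then show ?thesis using A by simp
  qed
  have eq: "A * (- ((1 / d) * (2 * chi * Eq - 2 * Er)) / (2 * sz * u0 + (1 / d) * (2 * u0 * S)))
      = A * (Er - chi * Eq) / (u0 * K)"
  proof -
    have den: "2 * sz * u0 + (1 / d) * (2 * u0 * S) = 2 * u0 * K / d" using d by (simp add: K_def field_simps)
    have num: "- ((1 / d) * (2 * chi * Eq - 2 * Er)) = 2 * (Er - chi * Eq) / d" using d by (simp add: field_simps)
    have h: "A * (2 * (Er - chi * Eq) / d / (2 * u0 * K / d)) = A * (Er - chi * Eq) / (u0 * K)"
      using d u0 K by (simp add: divide_simps)
    show ?thesis unfolding den num by (rule h)
  qed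
  show ?thesis
  proof (cases "Er - chi * Eq \<le> 0")
    case True
    have "A * (Er - chi * Eq) \<le> 0" using A True by (simp add: mult_nonneg_nonpos)
    then have "A * (Er - chi * Eq) / (u0 * K) \<le> 0" using u0 K by (simp add: divide_nonpos_pos)
    then show ?thesis using eq Er by simp
  next
    case False
    then have X: "Er - chi * Eq > 0" by simp
    have "A * (Er - chi * Eq) < u0 * K * (Er - chi * Eq)" using AK X by simp
    then have "A * (Er - chi * Eq) / (u0 * K) < Er - chi * Eq" using u0 K by (simp add: pos_divide_less_eq mult.commute)
    moreover have "chi * Eq \<ge> 0" using chi Eq by simp
    ultimately show ?thesis using eq by simp
  qed
qed

theorem lemma8:
  fixes p :: "real measure" and delta sz2 chi lam :: real
    and sighat :: "real \<Rightarrow> real" and U :: "real set"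
  assumes delta: "0 < delta" "delta < 1"
    and noise: "sz2 > 0"
    and prob: "prob_space p" and sets_p: "sets p = sets borel"
    and second_moment: "integrable p (\<lambda>b. b\<^sup>2)"
    and U: "open U" "chi \<in> U"
    and fixed_point: "\<And>c. c \<in> U \<Longrightarrow> c > 0 \<and> sighat c > 0 \<and>
        (sighat c)\<^sup>2 = sz2 + (1 / delta) *
          E_BZ p (\<lambda>b z. (soft_thresh (b + sighat c * z) (c * sighat c) - b)\<^sup>2)"
    and lambda_eq: "lam = chi * sighat chi *
          (1 - (1 / delta) * P_BZ p (\<lambda>b z. \<bar>b + sighat chi * z\<bar> > chi * sighat chi))"
    and lambda_pos: "lam > 0"
  shows "\<exists>D. ((\<lambda>c. P_BZ p (\<lambda>b z. \<bar>soft_thresh (b + sighat c * z) (c * sighat c)\<bar> > 0))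
              has_real_derivative D) (at chi) \<and> D < 0"
proof -
  interpret P: prob_space p by (rule prob)
  note I = prob sets_p second_moment
  define u where "u c = 1 / sighat c" for c
  define R where "R v c = sz2 * v\<^sup>2 + (1 / delta) * (\<integral>b. m (v * b) c \<partial>p) - 1" for v c
  define Rv where "Rv v c = 2 * sz2 * v + (1 / delta) * (\<integral>b. b * ma (v * b) c \<partial>p)" for v c
  define Q where "Q v c = (\<integral>b. q (v * b) c \<partial>p)" for v c
  define Qv where "Qv v c = (\<integral>b. b * qa (v * b) c \<partial>p)" for v c
  define u0 where "u0 = u chi"
  obtain e where e: "e > 0" "ball chi e \<subseteq> U" using U openE by blast
  have Upos: "c > 0" "sighat c > 0" if "c \<in> U" for c using fixed_point[OF that] by auto
  have upos: "u c > 0" if "c \<in> U" for c using Upos[OF that] by (simp add: u_def)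
  have chi: "chi > 0" using Upos U by auto
  have u0: "u0 > 0" using upos U by (simp add: u0_def)
  have Rzero: "R (u c) c = 0" if c: "c \<in> U" for c
  proof -
    define s where "s = sighat c"
    have s: "s > 0" using Upos[OF c] by (simp add: s_def)
    have "s\<^sup>2 = sz2 + (1 / delta) * (s\<^sup>2 * (\<integral>b. m (b / s) c \<partial>p))"
      using fixed_point[OF c] E_BZ_eq[OF prob sets_p s, of c] Upos[OF c] by (simp add: s_def)
    moreover have "(\<lambda>b. m (b / s) c) = (\<lambda>b. m (u c * b) c)" by (simp add: u_def s_def)
    ultimately have "s\<^sup>2 = sz2 + (1 / delta) * (s\<^sup>2 * (\<integral>b. m (u c * b) c \<partial>p))" by simp
    then have "1 = sz2 / s\<^sup>2 + (1 / delta) * (\<integral>b. m (u c * b) c \<partial>p)"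
      using s by (simp add: field_simps)
    then show ?thesis by (simp add: R_def u_def s_def power_divide)
  qed
  have DRv: "((\<lambda>v. R v c) has_real_derivative Rv v c) (at v)" if "c \<ge> 0" for v c
    unfolding R_def Rv_def using D_m_v[OF I that, of v] delta
    by (auto intro!: derivative_eq_intros)
  have Rv_pos: "Rv v c > 0" if "v > 0" "c \<ge> 0" for v c
  proof -
    have "0 \<le> (\<integral>b. b * ma (v * b) c \<partial>p)"
    proof (intro integral_nonneg_AE AE_I2)
      fix b
      have "b * ma (v * b) c = 2 * v * (b\<^sup>2 * (Phi (v * b + c) - Phi (v * b - c)))"
        by (simp add: ma_def power2_eq_square algebra_simps)
      then show "0 \<le> b * ma (v * b) c" using that Phi_diff_nonneg[OF that(2), of "v * b"] by simp
    qed
    then show ?thesis unfolding Rv_def using that noise delta by (simp add: add_pos_nonneg)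
  qed
  have Rmono: "R x c < R y c" if "c \<ge> 0" "0 < x" "x < y" for x y c
    by (rule DERIV_pos_imp_increasing[OF that(3)]) (use DRv Rv_pos that in \<open>force\<close>)
  have Rcont: "isCont (\<lambda>c. R v c) c0" if "c0 > 0" for v c0
  proof -
    have "((\<lambda>c. R v c) has_real_derivative (1 / delta) * (\<integral>b. mc (v * b) c0 \<partial>p)) (at c0)"
      unfolding R_def using D_m_c[OF I that, of v] delta by (auto intro!: derivative_eq_intros)
    then show ?thesis by (rule DERIV_isCont)
  qed
  have evU: "eventually (\<lambda>c. c \<in> U) (at chi)"
  proof -
    have "eventually (\<lambda>c. dist c chi < e) (at chi)" using e(1) eventually_at by blast
    then show ?thesis by eventually_elim (use e(2) in \<open>auto simp: dist_commute\<close>)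
  qed
  have ulim: "(u \<longlongrightarrow> u0) (at chi)"
  proof (rule tendstoI)
    fix eps :: real assume eps: "eps > 0"
    define r where "r = min eps (u0 / 2)"
    have r: "r > 0" "r \<le> eps" "r < u0" using eps u0 by (auto simp: r_def)
    have R0: "R u0 chi = 0" using Rzero[OF U(2)] by (simp add: u0_def)
    have "R (u0 - r) chi < 0" using Rmono[of chi "u0 - r" u0] r chi R0 by simp
    then have ev1: "eventually (\<lambda>c. R (u0 - r) c < 0) (at chi)"
      using Rcont[OF chi, of "u0 - r"] by (simp add: isCont_def order_tendstoD)
    have "R (u0 + r) chi > 0" using Rmono[of chi u0 "u0 + r"] r chi R0 u0 by simp
    then have ev2: "eventually (\<lambda>c. R (u0 + r) c > 0) (at chi)"
      using Rcont[OF chi, of "u0 + r"] by (simp add: isCont_def order_tendstoD)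
    show "eventually (\<lambda>c. dist (u c) u0 < eps) (at chi)"
      using ev1 ev2 evU
    proof eventually_elim
      case (elim c)
      have c0: "c \<ge> 0" using Upos[OF elim(3)] by simp
      have z: "R (u c) c = 0" by (rule Rzero[OF elim(3)])
      have uc: "u c > 0" by (rule upos[OF elim(3)])
      have "u c > u0 - r"
      proof (rule ccontr)
        assume "\<not> u c > u0 - r"
        then have "u c \<le> u0 - r" by simp
        then have "R (u c) c \<le> R (u0 - r) c"
          using Rmono[OF c0 uc, of "u0 - r"] by (cases "u c = u0 - r") auto
        then show False using z elim(1) by simp
      qed
      moreover have "u c < u0 + r"
      proof (rule ccontr)
        assume "\<not> u c < u0 + r"
        then have "u0 + r \<le> u c" by simp
        then have "R (u0 + r) c \<le> R (u c) c"
          using Rmono[OF c0, of "u0 + r" "u c"] r u0 by (cases "u c = u0 + r") auto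
        then show False using z elim(2) by simp
      qed
      ultimately show ?case using r by (simp add: dist_real_def abs_less_iff)
    qed
  qed
  define Rc where "Rc = (1 / delta) * (\<integral>b. mc (u0 * b) chi \<partial>p)"
  have DRc: "((\<lambda>c. R u0 c) has_real_derivative Rc) (at chi)"
    unfolding R_def Rc_def using D_m_c[OF I chi, of u0] delta by (auto intro!: derivative_eq_intros)
  have cont_Rv: "isCont (\<lambda>x. Rv (fst x) (snd x)) (u0, chi)"
    unfolding Rv_def by (intro continuous_intros C_ma[OF I])
  have du: "(u has_real_derivative (- Rc / Rv u0 chi)) (at chi)"
  proof (rule implicit_deriv[where d="min u0 chi" and R=R and Ru=Rv and Rc=Rc])
    show "min u0 chi > 0" using u0 chi by simp
    show "\<And>v c. \<bar>v - u0\<bar> < min u0 chi \<Longrightarrow> \<bar>c - chi\<bar> < min u0 chi \<Longrightarrow>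
        ((\<lambda>v. R v c) has_real_derivative Rv v c) (at v)"
      by (rule DRv) auto
    show "eventually (\<lambda>c. R (u c) c = 0) (at chi)" using evU by eventually_elim (rule Rzero)
    show "R u0 chi = 0" using Rzero[OF U(2)] by (simp add: u0_def)
    show "Rv u0 chi \<noteq> 0" using Rv_pos[OF u0, of chi] chi by simp
  qed (use cont_Rv ulim DRc in \<open>auto simp: u0_def\<close>)
  define Qc where "Qc = (\<integral>b. qc (u0 * b) chi \<partial>p)"
  have dQ: "((\<lambda>c. Q (u c) c) has_real_derivative (Qv u0 chi * (- Rc / Rv u0 chi) + Qc)) (at chi)"
  proof (rule chain_deriv[where d=1 and F=Q and Fu=Qv and Fc=Qc])
    show "\<And>v c. \<bar>v - u0\<bar> < 1 \<Longrightarrow> \<bar>c - chi\<bar> < 1 \<Longrightarrow> ((\<lambda>v. Q v c) has_real_derivative Qv v c) (at v)"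
      unfolding Q_def Qv_def by (rule D_q_v[OF I])
    show "isCont (\<lambda>x. Qv (fst x) (snd x)) (u0, chi)"
      unfolding Qv_def by (rule C_qa[OF I])
    show "((\<lambda>c. Q u0 c) has_real_derivative Qc) (at chi)"
      unfolding Q_def Qc_def by (rule D_q_c[OF I chi])
  qed (use du in \<open>auto simp: u0_def\<close>)
  have eqP: "P_BZ p (\<lambda>b z. \<bar>soft_thresh (b + sighat c * z) (c * sighat c)\<bar> > 0) = Q (u c) c"
    if c: "c \<in> U" for c
  proof -
    have "P_BZ p (\<lambda>b z. \<bar>soft_thresh (b + sighat c * z) (c * sighat c)\<bar> > 0) = (\<integral>b. q (b / sighat c) c \<partial>p)"
      using P_BZ_eq[OF prob sets_p, of "sighat c" c] Upos[OF c] by simp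
    also have "\<dots> = Q (u c) c" by (simp add: Q_def u_def)
    finally show ?thesis .
  qed
  have deriv: "((\<lambda>c. P_BZ p (\<lambda>b z. \<bar>soft_thresh (b + sighat c * z) (c * sighat c)\<bar> > 0))
      has_real_derivative (Qv u0 chi * (- Rc / Rv u0 chi) + Qc)) (at chi)"
    by (rule has_field_derivative_transform_within_open[OF dQ U]) (rule eqP[symmetric], assumption)
  define S where "S = (\<integral>b. b\<^sup>2 * (Phi (u0 * b + chi) - Phi (u0 * b - chi)) \<partial>p)"
  define Er where "Er = (\<integral>b. gd (u0 * b - chi) + gd (u0 * b + chi) \<partial>p)"
  define Eq where "Eq = (\<integral>b. q (u0 * b) chi \<partial>p)"
  have S0: "0 \<le> S" unfolding S_def
    by (intro integral_nonneg_AE AE_I2) (use Phi_diff_nonneg chi in \<open>auto intro: mult_nonneg_nonneg\<close>)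
  have Er0: "0 < Er" unfolding Er_def by (rule integral_pos_r[OF I])
  have Eq0: "0 \<le> Eq" unfolding Eq_def by (intro integral_nonneg_AE AE_I2) (simp add: q_bounds)
  have RvS: "Rv u0 chi = 2 * sz2 * u0 + (1 / delta) * (2 * u0 * S)"
  proof -
    have "(\<lambda>b. b * ma (u0 * b) chi) = (\<lambda>b. 2 * u0 * (b\<^sup>2 * (Phi (u0 * b + chi) - Phi (u0 * b - chi))))"
      by (simp add: ma_def power2_eq_square algebra_simps)
    then show ?thesis by (simp add: Rv_def S_def)
  qed
  have RcE: "Rc = (1 / delta) * (2 * chi * Eq - 2 * Er)"
  proof -
    have "(\<integral>b. mc (u0 * b) chi \<partial>p) = (\<integral>b. 2 * chi * q (u0 * b) chi - 2 * (gd (u0 * b - chi) + gd (u0 * b + chi)) \<partial>p)"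
      by (simp add: mc_def)
    also have "\<dots> = (\<integral>b. 2 * chi * q (u0 * b) chi \<partial>p) - (\<integral>b. 2 * (gd (u0 * b - chi) + gd (u0 * b + chi)) \<partial>p)"
      by (rule Bochner_Integration.integral_diff; rule integrable_mult_right)
         (use int_q[OF I, of u0 chi] int_r[OF I, of u0 chi] in auto)
    also have "\<dots> = 2 * chi * Eq - 2 * Er"
      unfolding Eq_def Er_def by (simp only: integral_mult_right_zero)
    finally show ?thesis by (simp add: Rc_def)
  qed
  have QcE: "Qc = - Er"
    unfolding Qc_def Er_def qc_def by (rule Bochner_Integration.integral_minus)
  have A0: "0 \<le> Qv u0 chi"
  proof -
    have "0 \<le> b * qa (u0 * b) chi" for b
    proof -
      have "0 \<le> (u0 * b) * qa (u0 * b) chi" using key(1)[of chi "u0 * b"] chi by simp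
      then have "0 \<le> u0 * (b * qa (u0 * b) chi)" by (simp add: algebra_simps)
      then show ?thesis using u0 by (simp add: zero_le_mult_iff)
    qed
    then show ?thesis unfolding Qv_def by (intro integral_nonneg_AE AE_I2)
  qed
  have AS: "Qv u0 chi \<le> u0 * S"
  proof -
    have pt: "b * qa (u0 * b) chi \<le> u0 * (b\<^sup>2 * (Phi (u0 * b + chi) - Phi (u0 * b - chi)))" for b
    proof -
      have "(u0 * b) * qa (u0 * b) chi \<le> (u0 * b)\<^sup>2 * (Phi (u0 * b + chi) - Phi (u0 * b - chi))"
        using key(2)[of chi "u0 * b"] chi by simp
      then have "u0 * (b * qa (u0 * b) chi) \<le> u0 * (u0 * (b\<^sup>2 * (Phi (u0 * b + chi) - Phi (u0 * b - chi))))"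
        by (simp add: power2_eq_square algebra_simps)
      then show ?thesis using u0 by simp
    qed
    have "Qv u0 chi \<le> (\<integral>b. u0 * (b\<^sup>2 * (Phi (u0 * b + chi) - Phi (u0 * b - chi))) \<partial>p)"
      unfolding Qv_def using int_qa[OF I, of u0 chi] int_S[OF I, of u0 chi]
      by (intro integral_mono pt) auto
    also have "\<dots> = u0 * S" by (simp add: S_def)
    finally show ?thesis .
  qed
  have neg: "Qv u0 chi * (- Rc / Rv u0 chi) + Qc < 0"
    unfolding RvS RcE QcE
    by (rule final_ineq[OF delta(1) noise u0 chi A0 AS S0 Er0 Eq0])
  show ?thesis using deriv neg by blast
qed


end
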